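(* Let $(X,d_X,\mu_X)$ be a compact metric measure space whose measure $\mu_X$ is strictly positive. Then the distance kernel embedding $\Phi:X\to\mathbb{C}^\infty$ is injective.
   Context: A metric measure space carries a Radon Borel measure; it is strictly positive if every nonempty open set has positive measure. The distance kernel operator $(D^Xf)(x)=\int_X f(y)d_X(x,y)\,d\mu_X(y)$ on $L^2(X,\mu_X)$ is compact self-adjoint; let $\phi_i$ be an orthonormal basis of real eigenfunctions with eigenvalues $\lambda_i$ ordered by decreasing absolute value (non-zero eigenvalues of multiplicity one, signs fixed by a convention). Set $\alpha_i=\sqrt{\lambda_i}\phi_i$ (square root with positive imaginary part if $\lambda_i<0$; eigenfunctions in the zero eigenspace replaced by the zero function). $\Phi(x)=(\alpha_1(x),\alpha_2(x),\dots)\in\mathbb{C}^\infty$. *)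

theory Defs
  imports "HOL-Analysis.Analysis"
begin

definition strictly_positive_measure :: "'a::metric_space measure \<Rightarrow> bool" where
  "strictly_positive_measure M \<longleftrightarrow>
     (\<forall>U. open U \<longrightarrow> U \<inter> space M \<noteq> {} \<longrightarrow> emeasure M (U \<inter> space M) > 0)"

text \<open>Compact metric measure space with a (finite, hence Radon) Borel measure.\<close>
definition compact_mm_space :: "'a::metric_space measure \<Rightarrow> bool" where
  "compact_mm_space M \<longleftrightarrow> compact (space M)
     \<and> sets M = sets (restrict_space borel (space M)) \<and> finite_measure M"

definition dist_kernel_op :: "'a::metric_space measure \<Rightarrow> ('a \<Rightarrow> real) \<Rightarrow> 'a \<Rightarrow> real" where
  "dist_kernel_op M f x = (\<integral>y. f y * dist x y \<partial>M)"

definition square_integrable :: "'a measure \<Rightarrow> ('a \<Rightarrow> real) \<Rightarrow> bool" where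
  "square_integrable M f \<longleftrightarrow> f \<in> borel_measurable M \<and> integrable M (\<lambda>x. (f x)\<^sup>2)"

definition dist_kernel_eigenbasis ::
  "'a::metric_space measure \<Rightarrow> nat set \<Rightarrow> (nat \<Rightarrow> 'a \<Rightarrow> real) \<Rightarrow> (nat \<Rightarrow> real) \<Rightarrow> bool" where
  "dist_kernel_eigenbasis M I phi lam \<longleftrightarrow>
     (\<forall>i j. j \<in> I \<longrightarrow> i \<le> j \<longrightarrow> i \<in> I)
   \<and> (\<forall>i\<in>I. square_integrable M (phi i))
   \<and> (\<forall>i\<in>I. \<forall>j\<in>I. (\<integral>x. phi i x * phi j x \<partial>M) = (if i = j then 1 else 0))
   \<and> (\<forall>f. square_integrable M f \<longrightarrow> (\<forall>i\<in>I. (\<integral>x. f x * phi i x \<partial>M) = 0)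
          \<longrightarrow> (AE x in M. f x = 0))
   \<and> (\<forall>i\<in>I. AE x in M. dist_kernel_op M (phi i) x = lam i * phi i x)
   \<and> (\<forall>i\<in>I. \<forall>j\<in>I. i \<le> j \<longrightarrow> \<bar>lam j\<bar> \<le> \<bar>lam i\<bar>)
   \<and> (\<forall>i\<in>I. \<forall>j\<in>I. i \<noteq> j \<longrightarrow> lam i \<noteq> 0 \<longrightarrow> lam i \<noteq> lam j)"

text \<open>alpha_i = sqrt(lam_i) phi_i, using for lam_i \<noteq> 0 the canonical (continuous)
representative phi_i = D^X phi_i / lam_i; zero-eigenvalue eigenfunctions are replaced by 0.
csqrt of a negative real has positive imaginary part.\<close>
definition dk_alpha :: "'a::metric_space measure \<Rightarrow> (nat \<Rightarrow> 'a \<Rightarrow> real) \<Rightarrow> (nat \<Rightarrow> real)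
    \<Rightarrow> nat \<Rightarrow> 'a \<Rightarrow> complex" where
  "dk_alpha M phi lam i x =
     (if lam i = 0 then 0
      else csqrt (complex_of_real (lam i)) * complex_of_real (dist_kernel_op M (phi i) x / lam i))"

definition dk_embedding :: "'a::metric_space measure \<Rightarrow> nat set \<Rightarrow> (nat \<Rightarrow> 'a \<Rightarrow> real)
    \<Rightarrow> (nat \<Rightarrow> real) \<Rightarrow> 'a \<Rightarrow> (nat \<Rightarrow> complex)" where
  "dk_embedding M I phi lam x = (\<lambda>i. if i \<in> I then dk_alpha M phi lam i x else 0)"

end

theory Submission
  imports Defs
begin

lemma ae_zero_cont:
  fixes f :: "'a::metric_space \<Rightarrow> real"
  assumes sets: "sets M = sets (restrict_space borel (space M))"
    and pos: "strictly_positive_measure M"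
    and cont: "continuous_on (space M) f"
    and ae: "AE x in M. f x = 0"
    and x: "x \<in> space M"
  shows "f x = 0"
proof (rule ccontr)
  assume nz: "f x \<noteq> 0"
  from cont x obtain d where d: "d > 0"
    "\<forall>x'\<in>space M. dist x' x < d \<longrightarrow> dist (f x') (f x) < \<bar>f x\<bar>"
    using nz unfolding continuous_on_iff by (metis zero_less_abs_iff)
  have sub: "ball x d \<inter> space M \<subseteq> {z\<in>space M. \<not> f z = 0}"
  proof
    fix z assume z: "z \<in> ball x d \<inter> space M"
    then have "dist (f z) (f x) < \<bar>f x\<bar>" using d by (auto simp: dist_commute)
    then show "z \<in> {z\<in>space M. \<not> f z = 0}" using z by (auto simp: dist_real_def)
  qed
  have meas: "ball x d \<inter> space M \<in> sets M"
    unfolding sets sets_restrict_space by (auto intro!: image_eqI[where x="ball x d"])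
  have pos': "emeasure M (ball x d \<inter> space M) > 0"
    using pos x d(1) unfolding strictly_positive_measure_def
    by (metis Int_iff centre_in_ball empty_iff open_ball)
  from ae obtain N where N: "{z\<in>space M. \<not> f z = 0} \<subseteq> N" "emeasure M N = 0" "N \<in> sets M"
    by (rule AE_E)
  have "emeasure M (ball x d \<inter> space M) \<le> emeasure M N"
    using sub N by (intro emeasure_mono) auto
  then show False using pos' N(2) by simp
qed

lemma meas_cont:
  assumes sets: "sets M = sets (restrict_space borel (space M))"
    and cont: "continuous_on (space M) (g :: 'a::metric_space \<Rightarrow> real)"
  shows "g \<in> borel_measurable M"
  unfolding measurable_cong_sets[OF sets refl]
  by (rule borel_measurable_continuous_on_restrict[OF cont])

lemma sq_int_integrable:
  assumes "finite_measure M" "square_integrable M f"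
  shows "integrable M f"
proof -
  interpret finite_measure M by fact
  have i1: "integrable M (\<lambda>x. 1 + (f x)\<^sup>2)"
    using assms(2) unfolding square_integrable_def by auto
  have "norm (f x) \<le> norm (1 + (f x)\<^sup>2)" for x
  proof -
    have h: "0 \<le> (\<bar>f x\<bar> - 1)\<^sup>2" by simp
    have "(\<bar>f x\<bar> - 1)\<^sup>2 = (f x)\<^sup>2 - 2*\<bar>f x\<bar> + 1"
      by (simp add: power2_diff power2_abs)
    moreover have "0 \<le> (f x)\<^sup>2" by simp
    ultimately show ?thesis using h by simp
  qed
  note nb = this
  show ?thesis
  proof (rule Bochner_Integration.integrable_bound[where f="\<lambda>x. 1 + (f x)\<^sup>2"])
    show "integrable M (\<lambda>x. 1 + (f x)\<^sup>2)" by fact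
    show "f \<in> borel_measurable M" using assms(2) unfolding square_integrable_def by simp
    show "AE x in M. norm (f x) \<le> norm (1 + (f x)\<^sup>2)" using nb by (intro AE_I2) blast
  qed
qed

theorem lemma3p6:
  fixes M :: "'a::metric_space measure"
    and I :: "nat set" and phi :: "nat \<Rightarrow> 'a \<Rightarrow> real" and lam :: "nat \<Rightarrow> real"
  assumes "compact_mm_space M"
    and "strictly_positive_measure M"
    and "dist_kernel_eigenbasis M I phi lam"
  shows "inj_on (dk_embedding M I phi lam) (space M)"
proof -
  have cpt: "compact (space M)" and sets: "sets M = sets (restrict_space borel (space M))"
    and fin: "finite_measure M"
    using assms(1) unfolding compact_mm_space_def by auto
  interpret finite_measure M by fact
  obtain B where B: "\<forall>x\<in>space M. \<forall>y\<in>space M. dist x y \<le> B"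
    using compact_imp_bounded[OF cpt] unfolding bounded_two_points by auto
  have EB: "\<forall>i\<in>I. square_integrable M (phi i)"
    "\<forall>f. square_integrable M f \<longrightarrow> (\<forall>i\<in>I. (\<integral>x. f x * phi i x \<partial>M) = 0)
          \<longrightarrow> (AE x in M. f x = 0)"
    "\<forall>i\<in>I. AE x in M. dist_kernel_op M (phi i) x = lam i * phi i x"
    using assms(3) unfolding dist_kernel_eigenbasis_def by auto
  have distcont: "continuous_on (space M) (\<lambda>y. dist z y)" for z :: 'a
    by (intro continuous_intros)
  have intd: "integrable M (\<lambda>y. f y * dist z y)" if f: "integrable M f" and z: "z \<in> space M"
    for f z
  proof (rule Bochner_Integration.integrable_bound[where f="\<lambda>y. B * f y"])
    show "integrable M (\<lambda>y. B * f y)" using f by simp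
    show "(\<lambda>y. f y * dist z y) \<in> borel_measurable M"
      using f meas_cont[OF sets distcont] by auto
    have "\<bar>dist z y\<bar> \<le> \<bar>B\<bar>" if "y \<in> space M" for y using B z that by fastforce
    then show "AE y in M. norm (f y * dist z y) \<le> norm (B * f y)"
    proof (intro AE_I2)
      fix y assume "y \<in> space M"
      then have "\<bar>f y\<bar> * \<bar>dist z y\<bar> \<le> \<bar>f y\<bar> * \<bar>B\<bar>"
        using \<open>\<And>y. y \<in> space M \<Longrightarrow> \<bar>dist z y\<bar> \<le> \<bar>B\<bar>\<close> by (intro mult_left_mono) auto
      then show "norm (f y * dist z y) \<le> norm (B * f y)"
        by (simp add: abs_mult mult.commute)
    qed
  qed
  have Dcont: "continuous_on (space M) (dist_kernel_op M f)" if f: "integrable M f" for f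
  proof (rule lipschitz_on_continuous_on)
    show "lipschitz_on (\<integral>y. \<bar>f y\<bar> \<partial>M) (space M) (dist_kernel_op M f)"
    proof (rule lipschitz_onI)
      show "0 \<le> (\<integral>y. \<bar>f y\<bar> \<partial>M)" by simp
      fix x z assume x: "x \<in> space M" and z: "z \<in> space M"
      have "dist (dist_kernel_op M f x) (dist_kernel_op M f z)
          = \<bar>\<integral>y. f y * dist x y - f y * dist z y \<partial>M\<bar>"
        unfolding dist_kernel_op_def dist_real_def
        using intd[OF f x] intd[OF f z] by simp
      also have "\<dots> \<le> (\<integral>y. \<bar>f y * dist x y - f y * dist z y\<bar> \<partial>M)"
        by (rule integral_abs_bound)
      also have "\<dots> \<le> (\<integral>y. \<bar>f y\<bar> * dist x z \<partial>M)"
      proof (rule integral_mono)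
        show "integrable M (\<lambda>y. \<bar>f y * dist x y - f y * dist z y\<bar>)"
          using intd[OF f x] intd[OF f z] by auto
        show "integrable M (\<lambda>y. \<bar>f y\<bar> * dist x z)" using f by auto
        fix y
        have "\<bar>dist x y - dist z y\<bar> \<le> dist x z" unfolding dist_commute[of z y] by (rule abs_dist_diff_le)
        then have "\<bar>f y\<bar> * \<bar>dist x y - dist z y\<bar> \<le> \<bar>f y\<bar> * dist x z"
          by (intro mult_left_mono) auto
        then show "\<bar>f y * dist x y - f y * dist z y\<bar> \<le> \<bar>f y\<bar> * dist x z"
          by (simp add: abs_mult right_diff_distrib[symmetric])
      qed
      also have "\<dots> = (\<integral>y. \<bar>f y\<bar> \<partial>M) * dist x z" by simp
      finally show "dist (dist_kernel_op M f x) (dist_kernel_op M f z)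
          \<le> (\<integral>y. \<bar>f y\<bar> \<partial>M) * dist x z" .
    qed
  qed
  show ?thesis
  proof (rule inj_onI)
    fix x x' assume x: "x \<in> space M" and x': "x' \<in> space M"
      and eq: "dk_embedding M I phi lam x = dk_embedding M I phi lam x'"
    have Deq: "dist_kernel_op M (phi i) x = dist_kernel_op M (phi i) x'" if i: "i \<in> I" for i
    proof (cases "lam i = 0")
      case True
      have ae: "AE y in M. dist_kernel_op M (phi i) y = 0"
        using EB(3) i True by auto
      have ii: "integrable M (phi i)" using sq_int_integrable[OF fin] EB(1) i by auto
      show ?thesis using ae_zero_cont[OF sets assms(2) Dcont[OF ii] ae] x x' by simp
    next
      case False
      from fun_cong[OF eq, of i] i False
      have "csqrt (complex_of_real (lam i)) * complex_of_real (dist_kernel_op M (phi i) x / lam i)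
          = csqrt (complex_of_real (lam i)) * complex_of_real (dist_kernel_op M (phi i) x' / lam i)"
        by (simp add: dk_embedding_def dk_alpha_def)
      then have "dist_kernel_op M (phi i) x / lam i = dist_kernel_op M (phi i) x' / lam i"
        using False by simp
      then show ?thesis using False by (simp add: divide_cancel_right)
    qed
    define g where "g y = dist x y - dist x' y" for y
    have gcont: "continuous_on (space M) g" unfolding g_def by (intro continuous_intros)
    have gm: "g \<in> borel_measurable M" using meas_cont[OF sets gcont] .
    have gsq: "square_integrable M g"
      unfolding square_integrable_def
    proof
      show "g \<in> borel_measurable M" by fact
      show "integrable M (\<lambda>y. (g y)\<^sup>2)"
      proof (rule integrable_const_bound[where B="(2*\<bar>B\<bar>)\<^sup>2"])
        show "(\<lambda>y. (g y)\<^sup>2) \<in> borel_measurable M" using gm by auto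
        have gb: "\<bar>g y\<bar> \<le> 2*\<bar>B\<bar>" if y: "y \<in> space M" for y
        proof -
          have "dist x y \<le> B" "dist x' y \<le> B" using B x x' y by auto
          then show ?thesis unfolding g_def abs_le_iff
            using zero_le_dist[of x y] zero_le_dist[of x' y] abs_ge_self[of B] by linarith
        qed
        then have "norm ((g y)\<^sup>2) \<le> (2*\<bar>B\<bar>)\<^sup>2" if y: "y \<in> space M" for y
        proof -
          have "\<bar>g y\<bar>\<^sup>2 \<le> (2*\<bar>B\<bar>)\<^sup>2" using gb[OF y] by (intro power_mono) auto
          then show ?thesis by simp
        qed
        then show "AE y in M. norm ((g y)\<^sup>2) \<le> (2*\<bar>B\<bar>)\<^sup>2" by auto
      qed
    qed
    have orth: "\<forall>i\<in>I. (\<integral>y. g y * phi i y \<partial>M) = 0"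
    proof
      fix i assume i: "i \<in> I"
      have ii: "integrable M (phi i)" using sq_int_integrable[OF fin] EB(1) i by auto
      have "(\<integral>y. g y * phi i y \<partial>M) = (\<integral>y. phi i y * dist x y - phi i y * dist x' y \<partial>M)"
        unfolding g_def by (simp add: algebra_simps)
      also have "\<dots> = dist_kernel_op M (phi i) x - dist_kernel_op M (phi i) x'"
        unfolding dist_kernel_op_def using intd[OF ii x] intd[OF ii x'] by simp
      finally show "(\<integral>y. g y * phi i y \<partial>M) = 0" using Deq[OF i] by simp
    qed
    have "AE y in M. g y = 0" using EB(2) gsq orth by blast
    then have "g x = 0" using ae_zero_cont[OF sets assms(2) gcont] x by blast
    then show "x = x'" unfolding g_def by simp
  qed
qed

end
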